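(* (a) For every $k\ge 3$, on the range $F_k\le n<F_{k+1}$ the sequence $a(n)$ attains its minimum uniquely at $n=F_k$, i.e., $a(t)>a(F_k)$ for all $F_k<t<F_{k+1}$. (b) For every $k\ge 5$, on the range $F_k\le n<F_{k+1}$ the sequence $a(n)$ attains its maximum exactly at $n=F_k+1$ and $n=F_k+2$; in particular $a(F_k+1)=a(F_k+2)\ge a(t)$ for all $F_k\le t<F_{k+1}$, with equality only for $t\in\{F_k+1,F_k+2\}$.
   Context: Let $(F_n)_{n\ge 0}$ be the Fibonacci numbers: $F_0=0$, $F_1=1$, $F_n=F_{n-1}+F_{n-2}$ for $n\ge 2$. Define $(a(n))_{n\ge 0}$ (OEIS A105774) by $a(0)=0$, $a(1)=1$, and for $n\ge 2$, $a(n)=F_{j+1}-a(n-F_j)$, where $j\ge 2$ is the unique index with $F_j<n\le F_{j+1}$. *)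

theory Defs
  imports Main "HOL-Number_Theory.Fib"
begin

text \<open>For n \<ge> 2, fidx n is the unique j \<ge> 2 with fib j < n \<le> fib (j+1);
  we take it as the least j with n \<le> fib (j+1) (this least j satisfies fib j < n
  and j \<ge> 2 whenever n \<ge> 2).\<close>
definition fidx :: "nat \<Rightarrow> nat" where
  "fidx n = (LEAST j. n \<le> fib (Suc j))"

text \<open>OEIS A105774. The guard 0 < fib (fidx n) < n always holds for n \<ge> 2;
  it only serves to make termination evident.\<close>
function a :: "nat \<Rightarrow> int" where
  "a n = (if n = 0 then 0 else if n = 1 then 1
          else if 0 < fib (fidx n) \<and> fib (fidx n) < n
               then int (fib (Suc (fidx n))) - a (n - fib (fidx n))
          else 0)"
  by auto
termination by (relation "measure id") auto

end

theory Submission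
  imports Defs
begin

declare a.simps[simp del]

lemma fib_ge: "n \<le> fib (Suc (Suc n))"
proof (induction n rule: nat_less_induct)
  case (1 n)
  show ?case
  proof (cases n)
    case 0 then show ?thesis by simp
  next
    case (Suc m)
    have "m \<le> fib (Suc (Suc m))" using 1 Suc by auto
    moreover have "fib (Suc (Suc (Suc m))) = fib (Suc (Suc m)) + fib (Suc m)"
      by simp
    moreover have "fib (Suc m) > 0" using fib_neq_0_nat by auto
    ultimately show ?thesis using Suc by simp
  qed
qed

lemma fib_strict: "2 \<le> j \<Longrightarrow> fib j < fib (Suc j)"
proof -
  assume "2 \<le> j"
  then obtain i where i: "j = Suc (Suc i)" by (metis add_2_eq_Suc le_Suc_ex)
  have "fib (Suc i) > 0" using fib_neq_0_nat by auto
  then show ?thesis using i by simp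
qed

lemma fib_smono: "2 \<le> i \<Longrightarrow> i < j \<Longrightarrow> fib i < fib j"
proof (induction j)
  case 0 then show ?case by simp
next
  case (Suc j)
  show ?case
  proof (cases "i = j")
    case True then show ?thesis using Suc fib_strict by simp
  next
    case False
    then have "fib i < fib j" using Suc by simp
    also have "fib j \<le> fib (Suc j)" by (rule fib_Suc_mono)
    finally show ?thesis .
  qed
qed

lemma fidx_char:
  assumes "2 \<le> j" "fib j < n" "n \<le> fib (Suc j)"
  shows "fidx n = j"
  unfolding fidx_def
proof (rule Least_equality)
  show "n \<le> fib (Suc j)" by fact
next
  fix y assume y: "n \<le> fib (Suc y)"
  show "j \<le> y"
  proof (rule ccontr)
    assume "\<not> j \<le> y"
    then have "Suc y \<le> j" by simp
    then have "fib (Suc y) \<le> fib j" by (rule fib_mono)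
    then show False using y assms by simp
  qed
qed

lemma fidx_ex:
  assumes "2 \<le> n"
  shows "\<exists>j. 2 \<le> j \<and> fib j < n \<and> n \<le> fib (Suc j)"
proof -
  have ex: "n \<le> fib (Suc (fidx n))"
    unfolding fidx_def
    by (rule LeastI[of _ "Suc n"]) (metis fib_ge)
  have "fidx n \<noteq> 0" using ex assms by (metis One_nat_def fib_1 not_less_eq_eq numeral_2_eq_2)
  moreover have "fidx n \<noteq> 1"
  proof
    assume h: "fidx n = 1"
    have "n \<le> fib 2" using ex h by (simp add: numeral_2_eq_2)
    then show False using assms by simp
  qed
  ultimately have j2: "2 \<le> fidx n" by simp
  then obtain i where i: "fidx n = Suc i" by (metis Suc_le_D add_2_eq_Suc le_Suc_ex)
  have "\<not> n \<le> fib (Suc i)"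
  proof
    assume "n \<le> fib (Suc i)"
    then have "fidx n \<le> i" unfolding fidx_def by (rule Least_le)
    then show False using i by simp
  qed
  then have "fib (fidx n) < n" using i by simp
  then show ?thesis using j2 ex by blast
qed

lemma a_rec:
  assumes "2 \<le> j" "fib j < n" "n \<le> fib (Suc j)"
  shows "a n = int (fib (Suc j)) - a (n - fib j)"
proof -
  have fj: "fib j > 0" using assms(1) fib_neq_0_nat by auto
  have n2: "n \<noteq> 0" "n \<noteq> 1" using assms fj by auto
  have "fidx n = j" using fidx_char assms by blast
  then show ?thesis using n2 fj assms(2) by (subst a.simps) simp
qed

lemma a1: "a 1 = 1" by (subst a.simps) simp
lemma a2: "a 2 = 1"
  using a_rec[of 2 2] a1 by (simp add: numeral_2_eq_2)
lemma a3: "a 3 = 2"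
proof -
  have f: "fib 3 = 2" by (simp add: numeral_3_eq_3 numeral_2_eq_2)
  have g: "fib 4 = 3" by (simp add: fib_plus_2[of 2, simplified] f)
  have "a 3 = int (fib (Suc 3)) - a (3 - fib 3)" by (rule a_rec) (simp_all add: f g)
  then show ?thesis using a1 f g by simp
qed

lemma fib3: "fib 3 = 2" by (simp add: numeral_3_eq_3 numeral_2_eq_2)
lemma fib4: "fib 4 = 3" by (simp add: fib_plus_2[of 2, simplified] fib3)

lemma main_bounds:
  "1 \<le> n \<Longrightarrow> 1 \<le> a n \<and> (3 \<le> n \<longrightarrow> 2 \<le> a n)
     \<and> (\<forall>k. 4 \<le> k \<longrightarrow> n \<le> fib k \<longrightarrow> a n \<le> int (fib k) - 1)
     \<and> (\<forall>k. 4 \<le> k \<longrightarrow> fib k < n \<longrightarrow> n \<le> fib (Suc k) \<longrightarrow> int (fib k) + 1 \<le> a n)"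
proof (induction n rule: nat_less_induct)
  case (1 n)
  show ?case
  proof (cases "n \<le> 3")
    case True
    have F: "4 \<le> k \<Longrightarrow> 3 \<le> fib k" for k using fib_mono[of 4 k] fib4 by simp
    have "n = 1 \<or> n = 2 \<or> n = 3" using True 1(2) by auto
    then have A: "1 \<le> a n" "a n \<le> 2" "3 \<le> n \<longrightarrow> 2 \<le> a n" using a1 a2 a3 by auto
    have B: "\<forall>k. 4 \<le> k \<longrightarrow> n \<le> fib k \<longrightarrow> a n \<le> int (fib k) - 1"
      using A(2) F by force
    have C: "\<forall>k. 4 \<le> k \<longrightarrow> fib k < n \<longrightarrow> n \<le> fib (Suc k) \<longrightarrow> int (fib k) + 1 \<le> a n"
      using F True by force
    show ?thesis using A B C by blast
  next
    case False
    then have n4: "4 \<le> n" by simp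
    obtain j where j: "2 \<le> j" "fib j < n" "n \<le> fib (Suc j)" using fidx_ex[of n] n4 by auto
    have j4: "4 \<le> j"
    proof (rule ccontr)
      assume "\<not> 4 \<le> j"
      then have "Suc j \<le> 4" by simp
      then have "fib (Suc j) \<le> 3" using fib_mono fib4 by metis
      then show False using j n4 by simp
    qed
    define s where "s = n - fib j"
    have s1: "1 \<le> s" "s < n" using j s_def fib_neq_0_nat[of j] by auto
    have fjs: "fib (Suc j) = fib j + fib (j - 1)"
      using j4 by (metis Suc_diff_1 fib.simps(3) add.commute le_trans not_less_eq_eq
          not_numeral_le_zero numeral_2_eq_2 order_refl zero_less_iff_neq_zero)
    have sle: "s \<le> fib (j - 1)" using s_def j fjs by simp
    have an: "a n = int (fib (Suc j)) - a s" using a_rec j s_def by simp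
    have IH: "1 \<le> a s \<and> (3 \<le> s \<longrightarrow> 2 \<le> a s)
     \<and> (\<forall>k. 4 \<le> k \<longrightarrow> s \<le> fib k \<longrightarrow> a s \<le> int (fib k) - 1)"
      using 1(1) s1 by blast
    have up: "a s \<le> int (fib (j - 1)) - 1"
    proof (cases "j = 4")
      case True
      then have "s \<le> 2" using sle fib3 by (simp add: numeral_3_eq_3)
      then have "s = 1 \<or> s = 2" using s1 by auto
      then show ?thesis using True fib3 a1 a2 by (auto simp: numeral_3_eq_3)
    next
      case False
      then show ?thesis using IH sle j4 by simp
    qed
    have lower: "int (fib j) + 1 \<le> a n" using an up fjs by simp
    have fj4: "3 \<le> fib j" using fib_mono[of 4 j] fib4 j4 by simp
    have P3: "\<forall>k. 4 \<le> k \<longrightarrow> n \<le> fib k \<longrightarrow> a n \<le> int (fib k) - 1"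
    proof (intro allI impI)
      fix k assume k: "4 \<le> k" "n \<le> fib k"
      have "Suc j \<le> k"
      proof (rule ccontr)
        assume "\<not> Suc j \<le> k"
        then have "fib k \<le> fib j" using fib_mono by simp
        then show False using k j by simp
      qed
      then have "fib (Suc j) \<le> fib k" by (rule fib_mono)
      then show "a n \<le> int (fib k) - 1" using an IH by simp
    qed
    have P4: "\<forall>k. 4 \<le> k \<longrightarrow> fib k < n \<longrightarrow> n \<le> fib (Suc k) \<longrightarrow> int (fib k) + 1 \<le> a n"
    proof (intro allI impI)
      fix k assume k: "4 \<le> k" "fib k < n" "n \<le> fib (Suc k)"
      have "fidx n = k" using fidx_char k by simp
      moreover have "fidx n = j" using fidx_char j by simp
      ultimately show "int (fib k) + 1 \<le> a n" using lower by simp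
    qed
    show ?thesis using P3 P4 lower fj4 by simp
  qed
qed

theorem proposition14:
  shows "(\<forall>k\<ge>3. \<forall>t. fib k < t \<and> t < fib (Suc k) \<longrightarrow> a t > a (fib k))
       \<and> (\<forall>k\<ge>5. a (fib k + 1) = a (fib k + 2)
              \<and> (\<forall>t. fib k \<le> t \<and> t < fib (Suc k) \<longrightarrow>
                     a t \<le> a (fib k + 1)
                     \<and> (a t = a (fib k + 1) \<longleftrightarrow> t \<in> {fib k + 1, fib k + 2})))"
proof (intro conjI allI impI)
  fix k t :: nat
  assume k: "3 \<le> k" and t: "fib k < t \<and> t < fib (Suc k)"
  have k4: "4 \<le> k"
  proof (rule ccontr)
    assume "\<not> 4 \<le> k"
    then have "k = 3" using k by simp
    then have "fib (Suc k) = fib 4" by simp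
    then show False using t fib3 fib4 \<open>k = 3\<close> by auto
  qed
  have "int (fib k) + 1 \<le> a t" using main_bounds[of t] t k4 by auto
  moreover have "a (fib k) \<le> int (fib k) - 1"
    using main_bounds[of "fib k"] k4 fib_neq_0_nat[of k] by auto
  ultimately show "a t > a (fib k)" by simp
next
  fix k :: nat assume k: "5 \<le> k"
  define F where "F = fib k"
  define G where "G = fib (Suc k)"
  define H where "H = fib (k - 1)"
  have GFH: "G = F + H" unfolding F_def G_def H_def using k
    by (metis Suc_diff_1 add.commute fib.simps(3) le_trans not_less_eq_eq zero_less_iff_neq_zero
        numeral_2_eq_2 order_refl not_numeral_le_zero)
  have H3: "3 \<le> H" unfolding H_def using fib_mono[of 4 "k - 1"] fib4 k by simp
  have k2: "2 \<le> k" using k by simp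
  have Fpos: "0 < F" unfolding F_def using fib_neq_0_nat k by simp
  have rec: "F < t \<Longrightarrow> t \<le> G \<Longrightarrow> a t = int G - a (t - F)" for t
    unfolding F_def G_def using a_rec[OF k2] by blast
  have e1: "a (F + 1) = int G - 1" using rec[of "F+1"] GFH H3 a1 by simp
  have e2: "a (F + 2) = int G - 1" using rec[of "F+2"] GFH H3 a2 by simp
  show "a (fib k + 1) = a (fib k + 2)" using e1 e2 F_def by simp
  fix t assume t: "fib k \<le> t \<and> t < fib (Suc k)"
  have "a t \<le> int G - 1 \<and> (a t = int G - 1 \<longleftrightarrow> t \<in> {F + 1, F + 2})"
  proof (cases "t = F")
    case True
    have "a F \<le> int F - 1"
      using main_bounds[of F] k F_def Fpos by auto
    then show ?thesis using True GFH H3 by auto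
  next
    case False
    then have tF: "F < t" "t \<le> G" using t F_def G_def by auto
    have at: "a t = int G - a (t - F)" using rec tF by blast
    have b: "1 \<le> a (t - F)" "3 \<le> t - F \<longrightarrow> 2 \<le> a (t - F)"
      using main_bounds[of "t - F"] tF by auto
    have "t - F = 1 \<or> t - F = 2 \<or> 3 \<le> t - F" using tF by auto
    then show ?thesis using at b a1 a2 tF by auto
  qed
  then show "a t \<le> a (fib k + 1)" "(a t = a (fib k + 1)) = (t \<in> {fib k + 1, fib k + 2})"
    using e1 F_def by auto
qed

end
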